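(* Let $\tau\in(0,1]$, suppose $k\,\alpha^{(2-\tau)d}\ge 2$, and let $\beta\ge 1$ be an integer. Run $\beta$ independent copies of the Fast-Filter model described in the context (with independent randomness), producing survival sets $S^{(j)}_1,\dots,S^{(j)}_k$ for $j=1,\dots,\beta$. Call a pair of distinct $u,v\in V$ close if $|\Gamma(u)\cap\Gamma(v)|\ge\tau d$, and say it is found if there exist $j\in[\beta]$ and $i\in[k]$ with $u,v\in S^{(j)}_i$. (a) For each close pair, the probability that it is not found is at most $2^{-\beta}$. (b) If $N\ge 2$ and $\beta\ge 3\log_2 N$, then with probability at least $1-1/N$ every close pair is found.
   Context: Let $G=(U,V,E)$ be a bipartite graph with $|U|=M$ and $|V|=N$. For $v\in V$ let $\Gamma(v)\subseteq U$ be its set of neighbours, and assume $|\Gamma(v)|=d\ge 1$ for every $v\in V$. Let $k=2^{m}$ and $\alpha=2^{-r}$, where $m,r$ are positive integers. Identify $[k]=\{1,\dots,k\}$ bijectively with the vector space $\mathrm{GF}(2)^m$ (for instance via the binary representation of $i-1$). Fast-Filter model: for each $u\in U$, independently draw a uniformly random matrix $A'_u\in\mathrm{GF}(2)^{r\times m}$ and a uniformly random vector $b'_u\in\mathrm{GF}(2)^{r}$; all of these are mutually independent. For $v\in V$, let $A^v$ be the $(dr)\times m$ matrix obtained by stacking the matrices $A'_u$, $u\in\Gamma(v)$, in a fixed order, and let $b^v\in\mathrm{GF}(2)^{dr}$ be obtained by stacking the $b'_u$, $u\in\Gamma(v)$, in the same order. For $i\in[k]$ (viewed as a vector in $\mathrm{GF}(2)^m$),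 the survival set is $S_i=\{v\in V: A^v i+b^v=0\}$, with arithmetic over $\mathrm{GF}(2)$. *)

theory Defs
  imports "HOL-Probability.Probability" "HOL-Library.Z2"
begin

text \<open>An outcome of beta independent copies of the Fast-Filter model is a function
  omega with omega j u = (A'_u, b'_u) for copy j < beta and u in U, where
  A'_u is an r x m matrix (entries indexed by s < r, t < m) and b'_u an r-vector.\<close>

type_synonym ('u) ff_outcome = "nat \<Rightarrow> 'u \<Rightarrow> (nat \<Rightarrow> nat \<Rightarrow> bit) \<times> (nat \<Rightarrow> bit)"

definition ff_space :: "nat \<Rightarrow> nat \<Rightarrow> nat \<Rightarrow> 'u set \<Rightarrow> 'u ff_outcome set" where
  "ff_space beta r m U =
     PiE {..<beta} (\<lambda>_. PiE U (\<lambda>_.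
        PiE {..<r} (\<lambda>_. PiE {..<m} (\<lambda>_. UNIV)) \<times> PiE {..<r} (\<lambda>_. UNIV)))"

text \<open>Uniform distribution on the outcome space = all entries independent uniform in GF(2).\<close>
definition ff_pmf :: "nat \<Rightarrow> nat \<Rightarrow> nat \<Rightarrow> 'u set \<Rightarrow> 'u ff_outcome pmf" where
  "ff_pmf beta r m U = pmf_of_set (ff_space beta r m U)"

text \<open>Identification of i in [k] with the vector in GF(2)^m given by the binary
  representation of i - 1 (coordinate t is bit t).\<close>
definition index_vec :: "nat \<Rightarrow> nat \<Rightarrow> bit" where
  "index_vec i t = of_bool (bit (i - 1) t)"

text \<open>Survival set S_i of copy j: v survives iff A^v i + b^v = 0, i.e. every
  stacked block A'_u i + b'_u (u in Gamma v) vanishes.\<close>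
definition surv_set ::
  "'v set \<Rightarrow> ('v \<Rightarrow> 'u set) \<Rightarrow> nat \<Rightarrow> nat \<Rightarrow> 'u ff_outcome \<Rightarrow> nat \<Rightarrow> nat \<Rightarrow> 'v set" where
  "surv_set V \<Gamma> r m \<omega> j i =
     {v \<in> V. \<forall>u \<in> \<Gamma> v. \<forall>s < r.
        (\<Sum>t<m. fst (\<omega> j u) s t * index_vec i t) + snd (\<omega> j u) s = 0}"

definition close_pair :: "('v \<Rightarrow> 'u set) \<Rightarrow> real \<Rightarrow> nat \<Rightarrow> 'v \<Rightarrow> 'v \<Rightarrow> bool" where
  "close_pair \<Gamma> \<tau> d u v \<longleftrightarrow> u \<noteq> v \<and> real (card (\<Gamma> u \<inter> \<Gamma> v)) \<ge> \<tau> * real d"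

definition found ::
  "'v set \<Rightarrow> ('v \<Rightarrow> 'u set) \<Rightarrow> nat \<Rightarrow> nat \<Rightarrow> nat \<Rightarrow> 'u ff_outcome \<Rightarrow> 'v \<Rightarrow> 'v \<Rightarrow> bool" where
  "found V \<Gamma> beta r m \<omega> u v \<longleftrightarrow>
     (\<exists>j < beta. \<exists>i \<in> {1..2^m}. u \<in> surv_set V \<Gamma> r m \<omega> j i \<and> v \<in> surv_set V \<Gamma> r m \<omega> j i)"

end

theory Submission
  imports Defs
begin

lemma UNIV_bit: "(UNIV::bit set) = {0,1}"
  by (auto intro: bit.exhaust)

lemma card_UNIV_bit: "card (UNIV::bit set) = 2"
  by (simp add: UNIV_bit)

lemma finite_UNIV_bit: "finite (UNIV::bit set)"
  by (simp add: UNIV_bit)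

lemma card_PiE_restr:
  assumes "finite U" "W \<subseteq> U"
  shows "card (PiE U (\<lambda>_. R) \<inter> {x. \<forall>w\<in>W. x w \<in> F}) = card (R \<inter> F) ^ card W * card R ^ (card U - card W)"
proof -
  have "PiE U (\<lambda>_. R) \<inter> {x. \<forall>w\<in>W. x w \<in> F} = PiE U (\<lambda>w. if w \<in> W then R \<inter> F else R)"
    using assms(2) by (auto simp: PiE_iff split: if_splits)
  moreover have "U \<inter> {w. w \<in> W} = W" "U \<inter> - {w. w \<in> W} = U - W" using assms(2) by auto
  moreover have "(\<Prod>w\<in>U. card (if w\<in>W then R\<inter>F else R)) = (\<Prod>w\<in>U. if w\<in>W then card (R\<inter>F) else card R)"
    by (rule prod.cong) auto
  ultimately show ?thesis using assms
    by (simp add: card_PiE prod.If_cases card_Diff_subset finite_subset)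
qed

lemma second_moment:
  fixes CS :: "'x set" and I :: "'i set" and E :: "'i \<Rightarrow> 'x set" and p :: real
  assumes "finite CS" "finite I" 
    and a: "\<And>i. i \<in> I \<Longrightarrow> real (card (CS \<inter> E i)) = card CS * p"
    and b: "\<And>i i'. i \<in> I \<Longrightarrow> i' \<in> I \<Longrightarrow> i \<noteq> i' \<Longrightarrow> real (card (CS \<inter> E i \<inter> E i')) = card CS * p^2"
    and kp: "real (card I) * p \<ge> 2" and p: "p > 0"
  shows "real (card {x\<in>CS. \<forall>i\<in>I. x \<notin> E i}) \<le> card CS / 2"
proof -
  define n where "n = real (card CS)"
  define k where "k = real (card I)"
  define c where "c = k * p"
  have c0: "c > 0" using kp unfolding c_def k_def by linarith
  define X where "X x = (\<Sum>i\<in>I. of_bool (x \<in> E i) :: real)" for x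
  have ind: "of_bool (x \<in> {x\<in>CS. \<forall>i\<in>I. x \<notin> E i}) \<le> (X x - c)^2 / c^2" if "x \<in> CS" for x
  proof (cases "\<forall>i\<in>I. x \<notin> E i")
    case True
    then have "X x = 0" by (simp add: X_def)
    then show ?thesis using True that c0 by simp
  next
    case False then show ?thesis by auto
  qed
  have "real (card {x\<in>CS. \<forall>i\<in>I. x \<notin> E i}) = (\<Sum>x\<in>CS. of_bool (x \<in> {x\<in>CS. \<forall>i\<in>I. x \<notin> E i}))"
    using assms(1) by (simp add: sum.If_cases Int_def)
  also have "\<dots> \<le> (\<Sum>x\<in>CS. (X x - c)^2 / c^2)" by (rule sum_mono) (rule ind)
  also have "\<dots> = ((\<Sum>x\<in>CS. (X x)^2) - 2 * c * (\<Sum>x\<in>CS. X x) + n * c^2) / c^2"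
    by (simp add: sum_divide_distrib[symmetric] power2_diff sum.distrib sum_subtractf sum_distrib_left[symmetric] sum_distrib_right[symmetric] n_def algebra_simps)
  also have "(\<Sum>x\<in>CS. X x) = k * n * p"
  proof -
    have "(\<Sum>x\<in>CS. X x) = (\<Sum>i\<in>I. \<Sum>x\<in>CS. of_bool (x \<in> E i))"
      unfolding X_def by (rule sum.swap)
    also have "\<dots> = (\<Sum>i\<in>I. n * p)"
    proof (rule sum.cong[OF refl])
      fix i assume "i \<in> I"
      have "(\<Sum>x\<in>CS. of_bool (x \<in> E i) :: real) = real (card (CS \<inter> E i))"
        using assms(1) by (simp add: sum.If_cases Int_def)
      then show "(\<Sum>x\<in>CS. of_bool (x \<in> E i) :: real) = n * p" using a[OF \<open>i\<in>I\<close>] n_def by simp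
    qed
    finally show ?thesis by (simp add: k_def)
  qed
  also have "(\<Sum>x\<in>CS. (X x)^2) = k * n * p + k * (k - 1) * n * p^2"
  proof -
    have "(\<Sum>x\<in>CS. (X x)^2) = (\<Sum>x\<in>CS. \<Sum>i\<in>I. \<Sum>i'\<in>I. of_bool (x \<in> E i \<inter> E i'))"
      unfolding X_def power2_eq_square sum_product by (simp add: of_bool_conj)
    also have "\<dots> = (\<Sum>i\<in>I. \<Sum>i'\<in>I. \<Sum>x\<in>CS. of_bool (x \<in> E i \<inter> E i'))"
      by (simp add: sum.swap[of _ CS] sum.swap[of _ CS I])
    also have "\<dots> = (\<Sum>i\<in>I. n * p + (k - 1) * n * p^2)"
    proof (rule sum.cong[OF refl])
      fix i assume i: "i \<in> I"
      have cc: "(\<Sum>x\<in>CS. of_bool (x \<in> E i \<inter> E i') :: real) = real (card (CS \<inter> E i \<inter> E i'))" for i'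
        using assms(1) by (simp add: sum.If_cases Int_def)
      have "(\<Sum>i'\<in>I. \<Sum>x\<in>CS. of_bool (x \<in> E i \<inter> E i') :: real)
          = (\<Sum>x\<in>CS. of_bool (x \<in> E i \<inter> E i)) + (\<Sum>i'\<in>I - {i}. \<Sum>x\<in>CS. of_bool (x \<in> E i \<inter> E i'))"
        using assms(2) i by (simp add: sum.remove)
      also have "\<dots> = n * p + (\<Sum>i'\<in>I - {i}. n * p^2)"
      proof (rule arg_cong2[where f="(+)"])
        show "(\<Sum>x\<in>CS. of_bool (x \<in> E i \<inter> E i)) = n * p" using cc[of i] a[OF i] n_def by simp
        show "(\<Sum>i'\<in>I - {i}. \<Sum>x\<in>CS. of_bool (x \<in> E i \<inter> E i')) = (\<Sum>i'\<in>I - {i}. n * p^2)"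
        proof (rule sum.cong[OF refl])
        fix i' assume "i' \<in> I - {i}"
        then show "(\<Sum>x\<in>CS. of_bool (x \<in> E i \<inter> E i')) = n * p^2" using cc[of i'] b[OF i, of i'] n_def by auto
      qed
      qed
      also have "\<dots> = n * p + (k - 1) * n * p^2"
      proof -
        have c1: "card (I-{i}) = card I - 1" using i by simp
        have "card I > 0" using i assms(2) by (auto simp: card_gt_0_iff)
        then have "real (card (I-{i})) = k - 1" using c1 by (simp add: k_def of_nat_diff)
        then show ?thesis by simp
      qed
      finally show "(\<Sum>i'\<in>I. \<Sum>x\<in>CS. of_bool (x \<in> E i \<inter> E i') :: real) = n * p + (k - 1) * n * p^2" .
    qed
    finally show ?thesis by (simp add: k_def algebra_simps)
  qed
  finally have "real (card {x\<in>CS. \<forall>i\<in>I. x \<notin> E i}) \<le> (k * n * p + k * (k - 1) * n * p\<^sup>2 - 2 * c * (k * n * p) + n * c\<^sup>2) / c\<^sup>2" .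
  also have "\<dots> = n * (k*p - k*p^2) / c^2" by (simp add: c_def power2_eq_square algebra_simps)
  also have "\<dots> \<le> n * c / c^2"
    using p c0 by (intro divide_right_mono mult_left_mono) (auto simp: n_def c_def k_def)
  also have "\<dots> = n / c" by (simp add: power2_eq_square)
  also have "\<dots> \<le> n / 2" using kp c_def c0 by (intro divide_left_mono) (auto simp: n_def k_def)
  finally show ?thesis by (simp add: n_def)
qed

lemma bit_add_eq0: "(a + b = (0::bit)) = (a = b)"
  by (cases a; cases b) simp_all

lemma bit_add_self: "a + a = (0::bit)"
  by (cases a) simp_all

lemma index_vec_distinct:
  assumes "i \<in> {1..2^m}" "i' \<in> {1..2^m}" "i \<noteq> i'"
  shows "\<exists>t<m. index_vec i t \<noteq> index_vec i' t"
proof (rule ccontr)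
  assume "\<not> ?thesis"
  then have h: "\<forall>t<m. bit (i - 1) t = bit (i' - 1) t"
    by (auto simp: index_vec_def)
  have a: "take_bit m (i - 1) = i - 1" "take_bit m (i' - 1) = i' - 1"
    using assms by (auto simp: take_bit_nat_eq_self_iff)
  have "take_bit m (i - 1) = take_bit m (i' - 1)"
    by (rule bit_eqI) (use h in \<open>auto simp: bit_take_bit_iff\<close>)
  then have "i - 1 = i' - 1" using a by simp
  then show False using assms by auto
qed

lemma sum_upd:
  assumes "finite A" "t0 \<in> A"
  shows "(\<Sum>t\<in>A. (rw(t0 := v)) t * y t) = (\<Sum>t\<in>A. rw t * y t) + (v - rw t0) * (y t0 :: 'a::comm_ring)"
proof -
  have "(\<Sum>t\<in>A. (rw(t0 := v)) t * y t) = v * y t0 + (\<Sum>t\<in>A - {t0}. (rw(t0 := v)) t * y t)"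
    using assms by (simp add: sum.remove)
  also have "(\<Sum>t\<in>A - {t0}. (rw(t0 := v)) t * y t) = (\<Sum>t\<in>A - {t0}. rw t * y t)"
    by (rule sum.cong) auto
  also have "(\<Sum>t\<in>A. rw t * y t) = rw t0 * y t0 + (\<Sum>t\<in>A - {t0}. rw t * y t)"
    using assms by (simp add: sum.remove)
  ultimately show ?thesis by (simp add: algebra_simps)
qed

definition rowsp :: "nat \<Rightarrow> (nat \<Rightarrow> bit) set" where
  "rowsp m = PiE {..<m} (\<lambda>_. UNIV)"

lemma card_rowsp: "card (rowsp m) = 2^m"
  by (simp add: rowsp_def card_PiE card_UNIV_bit)

lemma finite_rowsp: "finite (rowsp m)"
  by (simp add: rowsp_def finite_PiE finite_UNIV_bit)

lemma card_half:
  assumes "t0 < m" "y t0 \<noteq> y' t0"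
  shows "2 * card {rw \<in> rowsp m. (\<Sum>t<m. rw t * y t) = (\<Sum>t<m. rw t * y' t)} = 2^m"
proof -
  define D where "D rw = (\<Sum>t<m. rw t * y t) + (\<Sum>t<m. rw t * y' t)" for rw :: "nat \<Rightarrow> bit"
  define Z0 where "Z0 = {rw \<in> rowsp m. D rw = 0}"
  define Z1 where "Z1 = {rw \<in> rowsp m. D rw = 1}"
  have Z0eq: "{rw \<in> rowsp m. (\<Sum>t<m. rw t * y t) = (\<Sum>t<m. rw t * y' t)} = Z0"
    by (auto simp: Z0_def D_def bit_add_eq0)
  define fl where "fl rw = rw(t0 := rw t0 + 1)" for rw :: "nat \<Rightarrow> bit"
  have yy: "y t0 + y' t0 = 1" using assms(2) by (cases "y t0"; cases "y' t0") simp_all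
  have Dfl: "D (fl rw) = D rw + 1" for rw
  proof -
    have e1: "(\<Sum>t<m. (fl rw) t * y t) = (\<Sum>t<m. rw t * y t) + (rw t0 + 1 - rw t0) * y t0"
      unfolding fl_def by (rule sum_upd) (use assms in auto)
    have e2: "(\<Sum>t<m. (fl rw) t * y' t) = (\<Sum>t<m. rw t * y' t) + (rw t0 + 1 - rw t0) * y' t0"
      unfolding fl_def by (rule sum_upd) (use assms in auto)
    have "D (fl rw) = D rw + (y t0 + y' t0)"
      unfolding D_def e1 e2 by (simp del: add_bit_eq_xor mult_bit_eq_and add: algebra_simps)
    then show ?thesis using yy by simp
  qed
  have flfl: "fl (fl rw) = rw" for rw
    by (auto simp: fl_def fun_eq_iff add.assoc bit_add_self)
  have flr: "fl rw \<in> rowsp m" if "rw \<in> rowsp m" for rw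
    using that assms(1) by (auto simp: rowsp_def fl_def PiE_iff extensional_def)
  have "bij_betw fl Z0 Z1"
  proof (rule bij_betwI[where g=fl])
    show "fl \<in> Z0 \<rightarrow> Z1" using Dfl flr by (auto simp: Z0_def Z1_def)
    show "fl \<in> Z1 \<rightarrow> Z0" using Dfl flr by (auto simp: Z0_def Z1_def bit_add_self)
  qed (auto simp: flfl)
  then have "card Z0 = card Z1" by (rule bij_betw_same_card)
  moreover have "card Z0 + card Z1 = card (rowsp m)"
  proof -
    have "Z0 \<union> Z1 = rowsp m" by (auto simp: Z0_def Z1_def)
    moreover have "Z0 \<inter> Z1 = {}" by (auto simp: Z0_def Z1_def)
    ultimately show ?thesis using finite_rowsp
      by (metis card_Un_disjoint finite_Un)
  qed
  ultimately show ?thesis using Z0eq card_rowsp by simp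
qed

definition RR :: "nat \<Rightarrow> nat \<Rightarrow> ((nat \<Rightarrow> nat \<Rightarrow> bit) \<times> (nat \<Rightarrow> bit)) set" where
  "RR r m = PiE {..<r} (\<lambda>_. rowsp m) \<times> PiE {..<r} (\<lambda>_. UNIV)"

definition FF :: "nat \<Rightarrow> nat \<Rightarrow> (nat \<Rightarrow> bit) \<Rightarrow> ((nat \<Rightarrow> nat \<Rightarrow> bit) \<times> (nat \<Rightarrow> bit)) set" where
  "FF r m y = {ab. \<forall>s<r. (\<Sum>t<m. fst ab s t * y t) + snd ab s = 0}"

definition gg :: "nat \<Rightarrow> nat \<Rightarrow> (nat \<Rightarrow> bit) \<Rightarrow> (nat \<Rightarrow> nat \<Rightarrow> bit) \<Rightarrow> (nat \<Rightarrow> bit)" where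
  "gg r m y A = restrict (\<lambda>s. \<Sum>t<m. A s t * y t) {..<r}"

lemma finite_RR: "finite (RR r m)"
  by (simp add: RR_def finite_PiE finite_rowsp finite_UNIV_bit)

lemma card_RR: "card (RR r m) = (2^m)^r * 2^r"
  by (simp add: RR_def card_PiE card_rowsp card_UNIV_bit card_cartesian_product)

lemma RR_ne: "RR r m \<noteq> {}"
  using card_RR[of r m] by auto

lemma RR_FF: "RR r m \<inter> FF r m y = (\<lambda>A. (A, gg r m y A)) ` PiE {..<r} (\<lambda>_. rowsp m)"
proof (intro equalityI subsetI)
  fix ab assume ab: "ab \<in> RR r m \<inter> FF r m y"
  obtain A b where [simp]: "ab = (A, b)" by (cases ab)
  have "b = gg r m y A"
  proof
    fix s show "b s = gg r m y A s"
      using ab by (cases "s < r") (auto simp: RR_def FF_def gg_def bit_add_eq0 simp del: add_bit_eq_xor mult_bit_eq_and)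
  qed
  then show "ab \<in> (\<lambda>A. (A, gg r m y A)) ` PiE {..<r} (\<lambda>_. rowsp m)" using ab by (auto simp: RR_def)
next
  fix ab assume "ab \<in> (\<lambda>A. (A, gg r m y A)) ` PiE {..<r} (\<lambda>_. rowsp m)"
  then obtain A where A: "A \<in> PiE {..<r} (\<lambda>_. rowsp m)" and ab: "ab = (A, gg r m y A)" by blast
  have "gg r m y A \<in> PiE {..<r} (\<lambda>_. UNIV)" unfolding gg_def by (simp add: PiE_iff)
  then have "ab \<in> RR r m" using A ab by (simp add: RR_def)
  moreover have "ab \<in> FF r m y"
    unfolding FF_def ab by (simp add: gg_def bit_add_self del: add_bit_eq_xor mult_bit_eq_and)
  ultimately show "ab \<in> RR r m \<inter> FF r m y" by blast
qed

lemma RR_FF2: "RR r m \<inter> FF r m y \<inter> FF r m y' = (\<lambda>A. (A, gg r m y A)) `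
   PiE {..<r} (\<lambda>_. {rw \<in> rowsp m. (\<Sum>t<m. rw t * y t) = (\<Sum>t<m. rw t * y' t)})"
proof (intro equalityI subsetI)
  fix ab assume ab: "ab \<in> RR r m \<inter> FF r m y \<inter> FF r m y'"
  obtain A b where [simp]: "ab = (A, b)" by (cases ab)
  have "b = gg r m y A"
  proof
    fix s show "b s = gg r m y A s"
      using ab by (cases "s < r") (auto simp: RR_def FF_def gg_def bit_add_eq0 simp del: add_bit_eq_xor mult_bit_eq_and)
  qed
  moreover have "A \<in> PiE {..<r} (\<lambda>_. {rw \<in> rowsp m. (\<Sum>t<m. rw t * y t) = (\<Sum>t<m. rw t * y' t)})"
    using ab by (auto simp: RR_def FF_def bit_add_eq0 simp del: add_bit_eq_xor mult_bit_eq_and)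
  ultimately show "ab \<in> (\<lambda>A. (A, gg r m y A)) ` PiE {..<r} (\<lambda>_. {rw \<in> rowsp m. (\<Sum>t<m. rw t * y t) = (\<Sum>t<m. rw t * y' t)})"
    by auto
next
  fix ab assume "ab \<in> (\<lambda>A. (A, gg r m y A)) ` PiE {..<r} (\<lambda>_. {rw \<in> rowsp m. (\<Sum>t<m. rw t * y t) = (\<Sum>t<m. rw t * y' t)})"
  then obtain A where A: "A \<in> PiE {..<r} (\<lambda>_. {rw \<in> rowsp m. (\<Sum>t<m. rw t * y t) = (\<Sum>t<m. rw t * y' t)})"
     and ab: "ab = (A, gg r m y A)" by blast
  have "gg r m y A \<in> PiE {..<r} (\<lambda>_. UNIV)" unfolding gg_def by (simp add: PiE_iff)
  then have "ab \<in> RR r m" using A ab by (auto simp add: RR_def PiE_iff)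
  moreover have "ab \<in> FF r m y"
    unfolding FF_def ab by (simp add: gg_def bit_add_self del: add_bit_eq_xor mult_bit_eq_and)
  moreover have "ab \<in> FF r m y'"
  proof -
    have "\<forall>s<r. (\<Sum>t<m. A s t * y t) = (\<Sum>t<m. A s t * y' t)" using A by (auto simp: PiE_iff)
    then show ?thesis
      unfolding FF_def ab by (simp add: gg_def bit_add_self del: add_bit_eq_xor mult_bit_eq_and)
  qed
  ultimately show "ab \<in> RR r m \<inter> FF r m y \<inter> FF r m y'" by blast
qed

lemma inj_gg: "inj (\<lambda>A. (A, gg r m y A))"
  by (auto intro: injI)

lemma card_RR_FF: "real (card (RR r m \<inter> FF r m y)) = card (RR r m) * (1/2)^r"
proof -
  have "card (RR r m \<inter> FF r m y) = (2^m)^r"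
    unfolding RR_FF by (simp add: card_image[OF inj_on_subset[OF inj_gg]] card_PiE card_rowsp)
  then show ?thesis by (simp add: card_RR power_divide field_simps)
qed

lemma card_RR_FF2:
  assumes "t0 < m" "y t0 \<noteq> y' t0"
  shows "real (card (RR r m \<inter> FF r m y \<inter> FF r m y')) = card (RR r m) * ((1/2)^r)^2"
proof -
  let ?Z = "{rw \<in> rowsp m. (\<Sum>t<m. rw t * y t) = (\<Sum>t<m. rw t * y' t)}"
  have h: "2 * card ?Z = 2^m" using card_half[of t0 m y y', OF assms] .
  have "real (2 * card ?Z) = real (2^m)" using h by (simp only:)
  then have z: "real (card ?Z) = 2^m / 2" by simp
  have c: "card (RR r m \<inter> FF r m y \<inter> FF r m y') = card ?Z ^ r"
    unfolding RR_FF2 by (simp add: card_image[OF inj_on_subset[OF inj_gg]] card_PiE)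
  then have e: "real (card (RR r m \<inter> FF r m y \<inter> FF r m y')) = (2^m / 2)^r" by (simp only: c of_nat_power z)
  have "((2::real)^m / 2)^r = (2^m)^r * 2^r * ((1/2)^r)^2"
    by (simp add: power_divide power2_eq_square)
  then show ?thesis using e by (simp add: card_RR)
qed

lemma card_PiE_ratio:
  fixes q :: real
  assumes "finite U" "W \<subseteq> U" "finite R" "real (card (R \<inter> F)) = card R * q"
  shows "real (card (PiE U (\<lambda>_. R) \<inter> {x. \<forall>w\<in>W. x w \<in> F})) = card (PiE U (\<lambda>_. R)) * q ^ card W"
proof -
  have cw: "card W \<le> card U" using assms by (simp add: card_mono)
  have "real (card (PiE U (\<lambda>_. R) \<inter> {x. \<forall>w\<in>W. x w \<in> F})) = (card R * q) ^ card W * card R ^ (card U - card W)"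
    using card_PiE_restr[OF assms(1,2), of R F] assms(4) by simp
  also have "\<dots> = card R ^ (card W + (card U - card W)) * q ^ card W"
    by (simp add: power_mult_distrib power_add)
  also have "card W + (card U - card W) = card U" using cw by simp
  finally show ?thesis using assms(1) by (simp add: card_PiE)
qed

lemma one_pair:
  fixes U :: "'u set" and V :: "'v set" and \<Gamma> :: "'v \<Rightarrow> 'u set"
    and d m r beta :: nat and \<tau> :: real
  assumes "finite U" 
    and "\<forall>v \<in> V. \<Gamma> v \<subseteq> U"
    and "\<forall>v \<in> V. card (\<Gamma> v) = d"
    and "m > 0" and "r > 0"
    and "real (2^m) * ((1/2) ^ r) powr ((2 - \<tau>) * real d) \<ge> 2"
    and uV: "u \<in> V" and vV: "v \<in> V" and cl: "close_pair \<Gamma> \<tau> d u v"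
  shows "measure_pmf.prob (ff_pmf beta r m U) {\<omega>. \<not> found V \<Gamma> beta r m \<omega> u v} \<le> (1/2) ^ beta"
proof -
  define W where "W = \<Gamma> u \<union> \<Gamma> v"
  have WU: "W \<subseteq> U" using assms uV vV by (auto simp: W_def)
  define CS where "CS = PiE U (\<lambda>_. RR r m)"
  have ffs: "ff_space beta r m U = PiE {..<beta} (\<lambda>_. CS)"
    by (simp add: ff_space_def CS_def RR_def rowsp_def)
  have finCS: "finite CS" using assms(1) by (simp add: CS_def finite_PiE finite_RR)
  have neCS: "CS \<noteq> {}" using RR_ne by (simp add: CS_def PiE_eq_empty_iff)
  have cCS: "card CS > 0" using finCS neCS by (simp add: card_gt_0_iff)
  define I where "I = {1..(2::nat)^m}"
  define E where "E i = {x. \<forall>w\<in>W. x w \<in> FF r m (index_vec i)}" for i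
  define NF where "NF = {x. \<forall>i\<in>I. x \<notin> E i}"
  define p where "p = ((1/2::real)^r) ^ card W"
  have pp: "p > 0" by (simp add: p_def)
  have surv: "(u \<in> surv_set V \<Gamma> r m \<omega> j i \<and> v \<in> surv_set V \<Gamma> r m \<omega> j i) \<longleftrightarrow> \<omega> j \<in> E i" for \<omega> j i
    using uV vV unfolding surv_set_def E_def FF_def W_def mem_Collect_eq by blast
  have nf: "{\<omega>. \<not> found V \<Gamma> beta r m \<omega> u v} = {\<omega>. \<forall>j\<in>{..<beta}. \<omega> j \<in> NF}"
    unfolding found_def surv NF_def I_def by auto
  have fin\<Gamma>: "finite (\<Gamma> u)" "finite (\<Gamma> v)" using assms(1,2) uV vV finite_subset by blast+
  have "card W + card (\<Gamma> u \<inter> \<Gamma> v) = card (\<Gamma> u) + card (\<Gamma> v)"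
    unfolding W_def using card_Un_Int[OF fin\<Gamma>] by simp
  then have "real (card W) = 2 * real d - real (card (\<Gamma> u \<inter> \<Gamma> v))"
    using assms(3) uV vV by simp
  then have Wle: "real (card W) \<le> (2 - \<tau>) * real d" using cl by (simp add: close_pair_def algebra_simps)
  have "((1/2::real) ^ r) powr ((2 - \<tau>) * real d) \<le> ((1/2) ^ r) powr real (card W)"
    by (rule powr_mono'[OF Wle]) (auto simp: power_le_one)
  also have "\<dots> = p" by (simp add: p_def powr_realpow)
  finally have pw: "((1/2::real) ^ r) powr ((2 - \<tau>) * real d) \<le> p" .
  have "real (2^m) * ((1/2::real) ^ r) powr ((2 - \<tau>) * real d) \<le> real (2^m) * p"
    by (rule mult_left_mono[OF pw]) simp
  moreover have cI: "card I = 2^m" by (simp add: I_def)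
  ultimately have kp: "real (card I) * p \<ge> 2"
    using assms(6) by (simp only:)
  have a: "real (card (CS \<inter> E i)) = card CS * p" if "i \<in> I" for i
    unfolding CS_def E_def p_def by (rule card_PiE_ratio[OF assms(1) WU finite_RR card_RR_FF])
  have b: "real (card (CS \<inter> E i \<inter> E i')) = card CS * p^2" if hi: "i \<in> I" "i' \<in> I" "i \<noteq> i'" for i i'
  proof -
    obtain t0 where t0: "t0 < m" "index_vec i t0 \<noteq> index_vec i' t0"
      using index_vec_distinct[of i m i'] hi unfolding I_def by blast
    have "CS \<inter> E i \<inter> E i' = CS \<inter> {x. \<forall>w\<in>W. x w \<in> FF r m (index_vec i) \<inter> FF r m (index_vec i')}"
      unfolding E_def by auto
    moreover have "real (card (RR r m \<inter> (FF r m (index_vec i) \<inter> FF r m (index_vec i')))) = card (RR r m) * ((1/2)^r)^2"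
      using card_RR_FF2[of t0 m "index_vec i" "index_vec i'" r, OF t0] by (simp only: Int_assoc)
    then have "real (card (CS \<inter> {x. \<forall>w\<in>W. x w \<in> FF r m (index_vec i) \<inter> FF r m (index_vec i')})) = card CS * (((1/2)^r)^2)^card W"
      unfolding CS_def by (rule card_PiE_ratio[OF assms(1) WU finite_RR])
    moreover have "(((1/2::real)^r)^2)^card W = p^2"
      unfolding p_def by (simp only: power_mult[symmetric] mult.commute mult.left_commute)
    ultimately show ?thesis by simp
  qed
  have sm: "real (card (CS \<inter> NF)) \<le> card CS / 2"
  proof -
    have "CS \<inter> NF = {x\<in>CS. \<forall>i\<in>I. x \<notin> E i}" by (auto simp: NF_def)
    then show ?thesis using second_moment[OF finCS _ a b kp pp] by (simp add: I_def)
  qed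
  have ffne: "ff_space beta r m U \<noteq> {}" using neCS by (simp add: ffs PiE_eq_empty_iff)
  have fffin: "finite (ff_space beta r m U)" using finCS by (simp add: ffs finite_PiE)
  have "measure_pmf.prob (ff_pmf beta r m U) {\<omega>. \<not> found V \<Gamma> beta r m \<omega> u v}
      = real (card (ff_space beta r m U \<inter> {\<omega>. \<forall>j\<in>{..<beta}. \<omega> j \<in> NF})) / card (ff_space beta r m U)"
    unfolding ff_pmf_def nf by (rule measure_pmf_of_set[OF ffne fffin])
  also have "real (card (ff_space beta r m U \<inter> {\<omega>. \<forall>j\<in>{..<beta}. \<omega> j \<in> NF})) = card (ff_space beta r m U) * (card (CS \<inter> NF) / card CS) ^ beta"
    unfolding ffs using cCS by (subst card_PiE_ratio[OF _ _ finCS]) auto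
  also have "card (ff_space beta r m U) * (card (CS \<inter> NF) / card CS) ^ beta / card (ff_space beta r m U)
      = (card (CS \<inter> NF) / card CS) ^ beta" using ffne fffin by (simp add: card_gt_0_iff)
  also have "\<dots> \<le> (1/2)^beta"
    using sm cCS by (intro power_mono) (auto simp: field_simps)
  finally show ?thesis .
qed

theorem mainTheorem5:
  fixes U :: "'u set" and V :: "'v set" and \<Gamma> :: "'v \<Rightarrow> 'u set"
    and d m r beta :: nat and \<tau> :: real
  assumes "finite U" and "finite V"
    and "\<forall>v \<in> V. \<Gamma> v \<subseteq> U"
    and "d \<ge> 1" and "\<forall>v \<in> V. card (\<Gamma> v) = d"
    and "m > 0" and "r > 0"
    and "0 < \<tau>" and "\<tau> \<le> 1"
    and "real (2^m) * ((1/2) ^ r) powr ((2 - \<tau>) * real d) \<ge> 2"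
    and "beta \<ge> 1"
  shows "(\<forall>u \<in> V. \<forall>v \<in> V. close_pair \<Gamma> \<tau> d u v \<longrightarrow>
            measure_pmf.prob (ff_pmf beta r m U) {\<omega>. \<not> found V \<Gamma> beta r m \<omega> u v}
              \<le> (1/2) ^ beta)
       \<and> (card V \<ge> 2 \<and> real beta \<ge> 3 * log 2 (real (card V)) \<longrightarrow>
            measure_pmf.prob (ff_pmf beta r m U)
              {\<omega>. \<forall>u \<in> V. \<forall>v \<in> V. close_pair \<Gamma> \<tau> d u v \<longrightarrow> found V \<Gamma> beta r m \<omega> u v}
              \<ge> 1 - 1 / real (card V))"
proof
  have A: "\<forall>u \<in> V. \<forall>v \<in> V. close_pair \<Gamma> \<tau> d u v \<longrightarrow>
            measure_pmf.prob (ff_pmf beta r m U) {\<omega>. \<not> found V \<Gamma> beta r m \<omega> u v} \<le> (1/2) ^ beta"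
    using one_pair[OF assms(1,3,5,6,7,10)] by blast
  then show "\<forall>u \<in> V. \<forall>v \<in> V. close_pair \<Gamma> \<tau> d u v \<longrightarrow>
            measure_pmf.prob (ff_pmf beta r m U) {\<omega>. \<not> found V \<Gamma> beta r m \<omega> u v} \<le> (1/2) ^ beta" .
  show "card V \<ge> 2 \<and> real beta \<ge> 3 * log 2 (real (card V)) \<longrightarrow>
            measure_pmf.prob (ff_pmf beta r m U)
              {\<omega>. \<forall>u \<in> V. \<forall>v \<in> V. close_pair \<Gamma> \<tau> d u v \<longrightarrow> found V \<Gamma> beta r m \<omega> u v}
              \<ge> 1 - 1 / real (card V)"
  proof
    assume h: "card V \<ge> 2 \<and> real beta \<ge> 3 * log 2 (real (card V))"
    define N where "N = real (card V)"
    have N2: "N \<ge> 2" using h by (simp add: N_def)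
    define P where "P = ff_pmf beta r m U"
    define CP where "CP = {(u, v). u \<in> V \<and> v \<in> V \<and> close_pair \<Gamma> \<tau> d u v}"
    define B where "B = (\<lambda>(u, v). {\<omega>. \<not> found V \<Gamma> beta r m \<omega> u v})"
    define G where "G = {\<omega>. \<forall>u \<in> V. \<forall>v \<in> V. close_pair \<Gamma> \<tau> d u v \<longrightarrow> found V \<Gamma> beta r m \<omega> u v}"
    have finCP: "finite CP" 
      by (rule finite_subset[of _ "V \<times> V"]) (auto simp: CP_def assms(2))
    have cCP: "real (card CP) \<le> N^2"
    proof -
      have "card CP \<le> card (V \<times> V)"
        by (rule card_mono) (auto simp: CP_def assms(2))
      then have "real (card CP) \<le> real (card V * card V)" by (simp only: of_nat_le_iff card_cartesian_product)
      then show ?thesis by (simp add: N_def power2_eq_square)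
    qed
    have compl: "UNIV - G = (\<Union>c\<in>CP. B c)" by (auto simp: G_def CP_def B_def)
    have "measure_pmf.prob P (UNIV - G) \<le> (\<Sum>c\<in>CP. measure_pmf.prob P (B c))"
      unfolding compl by (rule measure_pmf.finite_measure_subadditive_finite[OF finCP]) auto
    also have "\<dots> \<le> (\<Sum>c\<in>CP. (1/2)^beta)"
      by (rule sum_mono) (use A in \<open>auto simp: CP_def B_def P_def\<close>)
    also have "\<dots> = card CP * (1/2)^beta" by simp
    also have "\<dots> \<le> N^2 * (1/2)^beta" by (rule mult_right_mono[OF cCP]) simp
    also have "\<dots> \<le> 1 / N"
    proof -
      have "2 powr (3 * log 2 N) = (2 powr log 2 N) powr 3" by (simp only: powr_powr mult.commute)
      also have "2 powr log 2 N = N" using N2 by simp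
      finally have "N powr 3 = 2 powr (3 * log 2 N)" by simp
      also have "\<dots> \<le> 2 powr real beta" using h by (simp add: N_def)
      finally have "N^3 \<le> 2^beta" using N2 by (simp add: powr_realpow)
      then have "N^2 * N \<le> 2^beta" by (simp add: power3_eq_cube power2_eq_square)
      then show ?thesis using N2 by (simp add: field_simps power_one_over)
    qed
    finally have "measure_pmf.prob P (UNIV - G) \<le> 1 / N" .
    moreover have "measure_pmf.prob P (UNIV - G) = 1 - measure_pmf.prob P G"
      using measure_pmf.prob_compl[of G P] by simp
    ultimately show "measure_pmf.prob (ff_pmf beta r m U) G \<ge> 1 - 1 / real (card V)"
      unfolding P_def N_def by linarith
  qed
qed

end
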